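(* For every $k\in\mathbb{N}$, the graph $\mathcal{T}_k$ has treewidth at most $k$ and contains every graph of treewidth at most $k$; that is, $\mathcal{T}_k$ is universal for the class of graphs with treewidth at most $k$.
   Context: All graphs are simple and countable; $G$ contains $H$ if $H$ is isomorphic to a subgraph of $G$. A tree-decomposition of $G$ is a family of bags $(B_x\subseteq V(G):x\in V(T))$ indexed by a tree $T$ such that every edge has both ends in some bag and, for every vertex $v$, $\{x:v\in B_x\}$ induces a nonempty subtree of $T$; its width is the maximum bag size minus one (bags bounded); treewidth is the minimum width. Let $\mathcal{T}$ be the tree whose vertices are all finite sequences $(x_1,\dots,x_n)$ with $n\ge 0$, $x_i\in\mathbb{N}$, where $(x_1,\dots,x_n)$ is adjacent to $(x_1,\dots,x_n,x_{n+1})$, rooted at the empty sequence (ancestor = prefix). Let $c:V(\mathcal{T})\to\{0,\dots,k\}$ be a colouring such that every vertex of colour $i$ has infinitely many children of each colour in $\{0,\dots,k\}\setminus\{i\}$. $\mathcal{T}_k$ is the graph on $V(\mathcal{T})$ in which $vw$ is an edge iff $v$ is a proper ancestor of $w$ and $v$ is the only vertex on the $v$–$w$ path of $\mathcal{T}$ with colour $c(v)$. *)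

theory Defs
  imports "HOL-Library.Countable_Set" "HOL-Library.Sublist"
begin

definition simple_graph :: "'a set \<Rightarrow> ('a \<Rightarrow> 'a \<Rightarrow> bool) \<Rightarrow> bool" where
  "simple_graph V E \<longleftrightarrow>
     (\<forall>x y. E x y \<longrightarrow> x \<in> V \<and> y \<in> V \<and> x \<noteq> y \<and> E y x)"

definition path_in :: "('a \<Rightarrow> 'a \<Rightarrow> bool) \<Rightarrow> 'a set \<Rightarrow> 'a list \<Rightarrow> 'a \<Rightarrow> 'a \<Rightarrow> bool" where
  "path_in E S p x y \<longleftrightarrow>
     p \<noteq> [] \<and> hd p = x \<and> last p = y \<and> distinct p \<and> set p \<subseteq> S \<and>
     (\<forall>i. Suc i < length p \<longrightarrow> E (p ! i) (p ! Suc i))"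

definition is_tree :: "'b set \<Rightarrow> ('b \<Rightarrow> 'b \<Rightarrow> bool) \<Rightarrow> bool" where
  "is_tree TV TE \<longleftrightarrow> simple_graph TV TE \<and> TV \<noteq> {} \<and>
     (\<forall>x\<in>TV. \<forall>y\<in>TV. \<exists>!p. path_in TE TV p x y)"

definition induces_connected :: "('b \<Rightarrow> 'b \<Rightarrow> bool) \<Rightarrow> 'b set \<Rightarrow> bool" where
  "induces_connected TE S \<longleftrightarrow> (\<forall>x\<in>S. \<forall>y\<in>S. \<exists>p. path_in TE S p x y)"

definition tree_decomposition ::
  "'b set \<Rightarrow> ('b \<Rightarrow> 'b \<Rightarrow> bool) \<Rightarrow> ('b \<Rightarrow> 'a set) \<Rightarrow> 'a set \<Rightarrow> ('a \<Rightarrow> 'a \<Rightarrow> bool) \<Rightarrow> bool" where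
  "tree_decomposition TV TE B V E \<longleftrightarrow>
     is_tree TV TE \<and>
     (\<forall>x\<in>TV. B x \<subseteq> V) \<and>
     (\<forall>u v. E u v \<longrightarrow> (\<exists>x\<in>TV. u \<in> B x \<and> v \<in> B x)) \<and>
     (\<forall>v\<in>V. {x\<in>TV. v \<in> B x} \<noteq> {} \<and> induces_connected TE {x\<in>TV. v \<in> B x})"

definition tw_le :: "'b itself \<Rightarrow> nat \<Rightarrow> 'a set \<Rightarrow> ('a \<Rightarrow> 'a \<Rightarrow> bool) \<Rightarrow> bool" where
  "tw_le _ k V E \<longleftrightarrow>
     (\<exists>(TV::'b set) TE B. tree_decomposition TV TE B V E \<and>
        (\<forall>x\<in>TV. finite (B x) \<and> card (B x) \<le> k + 1))"

definition contains_graph ::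
  "'v set \<Rightarrow> ('v \<Rightarrow> 'v \<Rightarrow> bool) \<Rightarrow> 'a set \<Rightarrow> ('a \<Rightarrow> 'a \<Rightarrow> bool) \<Rightarrow> bool" where
  "contains_graph VG EG VH EH \<longleftrightarrow>
     (\<exists>f. inj_on f VH \<and> f ` VH \<subseteq> VG \<and> (\<forall>x y. EH x y \<longrightarrow> EG (f x) (f y)))"

text \<open>Vertices of the tree \<T> are finite sequences of naturals (lists); the children of v
  are the lists v @ [n]; ancestor = prefix.\<close>
definition Tk_colouring :: "nat \<Rightarrow> (nat list \<Rightarrow> nat) \<Rightarrow> bool" where
  "Tk_colouring k c \<longleftrightarrow>
     (\<forall>v. c v \<le> k) \<and>
     (\<forall>v j. j \<le> k \<and> j \<noteq> c v \<longrightarrow> infinite {n. c (v @ [n]) = j})"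

text \<open>v is a proper ancestor of w and v is the only vertex on the v--w path of \<T>
  (the prefixes u of w with v \<le> u) having colour c v.\<close>
definition Tk_arc :: "(nat list \<Rightarrow> nat) \<Rightarrow> nat list \<Rightarrow> nat list \<Rightarrow> bool" where
  "Tk_arc c v w \<longleftrightarrow>
     strict_prefix v w \<and> (\<forall>u. strict_prefix v u \<and> prefix u w \<longrightarrow> c u \<noteq> c v)"

definition Tk_edge :: "(nat list \<Rightarrow> nat) \<Rightarrow> nat list \<Rightarrow> nat list \<Rightarrow> bool" where
  "Tk_edge c v w \<longleftrightarrow> Tk_arc c v w \<or> Tk_arc c w v"

end

theory Submission
  imports Defs
begin

lemma path_in_iff:
  "path_in E S p x y \<longleftrightarrow> p \<noteq> [] \<and> hd p = x \<and> last p = y \<and> distinct p \<and> set p \<subseteq> S \<and> successively E p"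
  unfolding path_in_def successively_conv_nth by blast

lemma walk_to_path:
  "p \<noteq> [] \<Longrightarrow> successively (\<lambda>a b. a = b \<or> E a b) p \<Longrightarrow> set p \<subseteq> S \<Longrightarrow>
   \<exists>q. path_in E S q (hd p) (last p)"
proof (induction "length p" arbitrary: p rule: less_induct)
  case less
  show ?case
  proof (cases "distinct p")
    case True
    have "successively E p"
    proof -
      have "successively (\<lambda>a b. a = b \<or> E a b) p" by fact
      then show ?thesis using True
        unfolding successively_conv_nth
        by (metis Suc_lessD distinct_conv_nth lessI n_not_Suc_n)
    qed
    then show ?thesis using True less.prems by (auto simp: path_in_iff)
  next
    case False
    then obtain xs ys zs y where p: "p = xs@[y]@ys@[y]@zs" using not_distinct_decomp by blast
    define p' where "p' = xs@[y]@zs"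
    have len: "length p' < length p" using p p'_def by simp
    have s: "successively (\<lambda>a b. a = b \<or> E a b) p'"
      using less.prems(2) unfolding p p'_def
      by (auto simp: successively_append_iff successively_Cons split: if_splits)
    have hd: "hd p' = hd p" unfolding p p'_def by (cases xs) auto
    have lst: "last p' = last p" unfolding p p'_def by (cases zs) auto
    have "set p' \<subseteq> S" using less.prems(3) unfolding p p'_def by auto
    from less.hyps[OF len _ s this] hd lst p'_def show ?thesis by auto
  qed
qed

definition TE1 :: "nat list \<Rightarrow> nat list \<Rightarrow> bool" where
  "TE1 v w \<longleftrightarrow> (\<exists>n. w = v @ [n]) \<or> (\<exists>n. v = w @ [n])"

lemma TE1_sym: "TE1 v w \<longleftrightarrow> TE1 w v" unfolding TE1_def by auto

lemma down_walk:
  "prefix v x \<Longrightarrow> \<exists>p. p \<noteq> [] \<and> hd p = v \<and> last p = x \<and> successively TE1 p \<and>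
     set p \<subseteq> {z. prefix v z \<and> prefix z x}"
proof (induction x rule: rev_induct)
  case Nil
  then show ?case by (intro exI[of _ "[[]]"]) auto
next
  case (snoc a x)
  show ?case
  proof (cases "v = x @ [a]")
    case True
    then show ?thesis by (intro exI[of _ "[v]"]) auto
  next
    case False
    with snoc.prems have "prefix v x" by simp
    from snoc.IH[OF this] obtain p where p: "p \<noteq> []" "hd p = v" "last p = x" "successively TE1 p"
      "set p \<subseteq> {z. prefix v z \<and> prefix z x}" by blast
    show ?thesis
      using p snoc.prems
      by (intro exI[of _ "p @ [x@[a]]"]) (auto simp: successively_append_iff TE1_def prefix_order.trans)
  qed
qed

lemma conn_lemma:
  assumes "prefix v x" "prefix v y"
    and "\<And>z. prefix v z \<Longrightarrow> prefix z x \<Longrightarrow> z \<in> S"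
    and "\<And>z. prefix v z \<Longrightarrow> prefix z y \<Longrightarrow> z \<in> S"
  shows "\<exists>q. path_in TE1 S q x y"
proof -
  obtain px where px: "px \<noteq> []" "hd px = v" "last px = x" "successively TE1 px"
      "set px \<subseteq> {z. prefix v z \<and> prefix z x}" using down_walk[OF assms(1)] by blast
  obtain py where py: "py \<noteq> []" "hd py = v" "last py = y" "successively TE1 py"
      "set py \<subseteq> {z. prefix v z \<and> prefix z y}" using down_walk[OF assms(2)] by blast
  define w where "w = rev px @ py"
  have s1: "successively (\<lambda>a b. a = b \<or> TE1 a b) (rev px)"
    using px(4) by (simp add: TE1_sym successively_mono[where P="TE1"] )
  have s2: "successively (\<lambda>a b. a = b \<or> TE1 a b) py"
    using py(4) by (rule successively_mono) auto
  have "successively (\<lambda>a b. a = b \<or> TE1 a b) w"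
    unfolding w_def using s1 s2 px py by (auto simp: successively_append_iff last_rev)
  moreover have "set w \<subseteq> S" unfolding w_def using px(5) py(5) assms(3,4) by auto
  moreover have "w \<noteq> []" "hd w = x" "last w = y" unfolding w_def using px py by (auto simp: hd_rev)
  ultimately show ?thesis using walk_to_path[of w TE1 S] by auto
qed

lemma path_sub_prefix:
  assumes "successively TE1 p" "p \<noteq> []" "prefix a (hd p)" "a \<noteq> []" "butlast a \<notin> set p"
  shows "\<forall>z\<in>set p. prefix a z"
  using assms
proof (induction p)
  case Nil then show ?case by simp
next
  case (Cons z p)
  show ?case
  proof (cases p)
    case Nil with Cons show ?thesis by simp
  next
    case (Cons z' p')
    have e: "TE1 z z'" using Cons.prems(1) \<open>p = z' # p'\<close> by simp
    have az: "prefix a z" using Cons.prems(3) by simp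
    have "prefix a z'"
    proof -
      from e show ?thesis
      proof (unfold TE1_def, elim disjE exE)
        fix n assume "z' = z @ [n]" then show ?thesis using az by simp
      next
        fix n assume zz: "z = z' @ [n]"
        have "z \<noteq> a"
        proof
          assume "z = a" then have "butlast a = z'" using zz by (metis butlast_snoc)
          then show False using Cons.prems(5) \<open>p = z' # p'\<close> by simp
        qed
        then show ?thesis using az zz by simp
      qed
    qed
    then have "\<forall>x\<in>set p. prefix a x"
      using Cons.IH Cons.prems \<open>p = z' # p'\<close> by (auto simp: successively_Cons)
    then show ?thesis using az by simp
  qed
qed

lemma TE1_unique:
  "path_in TE1 UNIV p x y \<Longrightarrow> path_in TE1 UNIV q x y \<Longrightarrow> p = q"
proof (induction p arbitrary: x q)
  case Nil then show ?case by (simp add: path_in_iff)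
next
  case (Cons x0 p)
  have x0: "x0 = x" using Cons.prems by (simp add: path_in_iff)
  obtain q0 q' where q: "q = q0 # q'" using Cons.prems(2) by (cases q) (auto simp: path_in_iff)
  have q0: "q0 = x" using Cons.prems(2) q by (simp add: path_in_iff)
  show ?case
  proof (cases "p = []")
    case True
    then have "y = x" using Cons.prems x0 by (simp add: path_in_iff)
    have "q' = []"
    proof (rule ccontr)
      assume ne: "q' \<noteq> []"
      then have "last q = last q'" using q by simp
      then have "x \<in> set q'" using Cons.prems(2) \<open>y = x\<close> last_in_set[OF ne] by (simp add: path_in_iff)
      then show False using Cons.prems(2) q q0 by (simp add: path_in_iff)
    qed
    then show ?thesis using True q x0 q0 by simp
  next
    case pne: False
    show ?thesis
    proof (cases "q' = []")
      case True
      then have "y = x" using Cons.prems(2) q q0 by (simp add: path_in_iff)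
      have "last p \<in> set p" using pne by simp
      moreover have "last p = x" using Cons.prems(1) pne \<open>y = x\<close> by (simp add: path_in_iff)
      ultimately show ?thesis using Cons.prems(1) x0 by (simp add: path_in_iff)
    next
      case qne: False
      have pp: "path_in TE1 UNIV p (hd p) y" using Cons.prems(1) pne
        by (auto simp: path_in_iff successively_Cons)
      have qp: "path_in TE1 UNIV q' (hd q') y" using Cons.prems(2) q qne
        by (auto simp: path_in_iff successively_Cons)
      have ep: "TE1 x (hd p)" using Cons.prems(1) pne x0 by (auto simp: path_in_iff successively_Cons)
      have eq: "TE1 x (hd q')" using Cons.prems(2) qne q q0 by (auto simp: path_in_iff successively_Cons)
      have xp: "x \<notin> set p" using Cons.prems(1) x0 by (simp add: path_in_iff)
      have xq: "x \<notin> set q'" using Cons.prems(2) q q0 by (simp add: path_in_iff)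
      have child: "prefix (x @ [n]) y" if "successively TE1 r" "r \<noteq> []" "hd r = x @ [n]"
        "last r = y" "x \<notin> set r" for r n
      proof -
        have "\<forall>z\<in>set r. prefix (x @ [n]) z" using path_sub_prefix[of r "x@[n]"] that by simp
        then show ?thesis using that(2,4) last_in_set[of r] by blast
      qed
      have childall: "\<forall>z\<in>set r. prefix (x @ [n]) z" if "successively TE1 r" "r \<noteq> []" "last r = x @ [n] \<or> prefix (x@[n]) (last r)"
        "x \<notin> set r" for r n
      proof -
        have "successively TE1 (rev r)" unfolding successively_rev
          by (rule successively_mono[OF that(1)]) (simp add: TE1_def, blast)
        moreover have "rev r \<noteq> []" "hd (rev r) = last r" using that(2) by (auto simp: hd_rev)
        moreover have "butlast (x@[n]) \<notin> set (rev r)" using that(4) by simp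
        ultimately show ?thesis using path_sub_prefix[of "rev r" "x@[n]"] that(3) by auto
      qed
      have "hd p = hd q'"
      proof (rule ccontr)
        assume ne: "hd p \<noteq> hd q'"
        have sp: "successively TE1 p" "p \<noteq> []" "last p = y" using pp by (auto simp: path_in_iff)
        have sq: "successively TE1 q'" "q' \<noteq> []" "last q' = y" using qp by (auto simp: path_in_iff)
        consider (cc) n m where "hd p = x @ [n]" "hd q' = x @ [m]"
          | (pc) n m where "x = hd p @ [n]" "hd q' = x @ [m]"
          | (cp) n m where "hd p = x @ [n]" "x = hd q' @ [m]"
          | (pp) n m where "x = hd p @ [n]" "x = hd q' @ [m]"
          using ep eq unfolding TE1_def by blast
        then show False
        proof cases
          case cc
          have "prefix (x@[n]) y" "prefix (x@[m]) y" using child[OF sp(1,2) cc(1) sp(3) xp] child[OF sq(1,2) cc(2) sq(3) xq] by auto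
          then have "n = m" using prefix_same_cases by fastforce
          then show False using ne cc by simp
        next
          case pc
          have "prefix (x@[m]) y" using child[OF sq(1,2) pc(2) sq(3) xq] .
          then have "\<forall>z\<in>set p. prefix (x @ [m]) z" using childall[OF sp(1,2) _ xp] sp(3) by auto
          then have "prefix (x@[m]) (hd p)" using sp(2) by simp
          then show False using pc(1) by (metis append_assoc length_append prefix_length_le impossible_Cons length_Cons le_add1 le_imp_less_Suc not_less_eq_eq list.size(3) length_append_singleton)
        next
          case cp
          have "prefix (x@[n]) y" using child[OF sp(1,2) cp(1) sp(3) xp] .
          then have "\<forall>z\<in>set q'. prefix (x @ [n]) z" using childall[OF sq(1,2) _ xq] sq(3) by auto
          then have "prefix (x@[n]) (hd q')" using sq(2) by simp
          then show False using cp(2) by (metis prefix_length_le length_append_singleton Suc_n_not_le_n le_SucI)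
        next
          case pp
          then show False using ne by simp
        qed
      qed
      then have "p = q'" using Cons.IH[OF pp] qp by simp
      then show ?thesis using q x0 q0 by simp
    qed
  qed
qed

lemma TE1_tree: "is_tree (UNIV :: nat list set) TE1"
proof -
  have "simple_graph UNIV TE1" unfolding simple_graph_def TE1_def by auto
  moreover have "\<exists>p. path_in TE1 UNIV p x y" for x y
    using conn_lemma[of "[]" x y UNIV] by auto
  ultimately show ?thesis unfolding is_tree_def using TE1_unique by blast
qed

definition B1 :: "(nat list \<Rightarrow> nat) \<Rightarrow> nat list \<Rightarrow> nat list set" where
  "B1 c x = {u. prefix u x \<and> (\<forall>w. strict_prefix u w \<and> prefix w x \<longrightarrow> c w \<noteq> c u)}"

lemma part1:
  assumes "Tk_colouring k c"
  shows "tw_le TYPE(nat list) k UNIV (Tk_edge c)"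
proof -
  have col: "\<And>v. c v \<le> k" using assms by (simp add: Tk_colouring_def)
  have fin: "finite (B1 c x)" for x
    by (rule finite_subset[of _ "set (prefixes x)"]) (auto simp: B1_def)
  have inj: "inj_on c (B1 c x)" for x
  proof (rule inj_onI)
    fix u1 u2 assume u: "u1 \<in> B1 c x" "u2 \<in> B1 c x" "c u1 = c u2"
    show "u1 = u2"
    proof (rule ccontr)
      assume ne: "u1 \<noteq> u2"
      have "prefix u1 x" "prefix u2 x" using u by (auto simp: B1_def)
      then have "prefix u1 u2 \<or> prefix u2 u1" using prefix_same_cases by blast
      then show False
      proof
        assume "prefix u1 u2"
        then have "strict_prefix u1 u2" using ne by auto
        then show False using u \<open>prefix u2 x\<close> unfolding B1_def by auto
      next
        assume "prefix u2 u1"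
        then have "strict_prefix u2 u1" using ne by auto
        then show False using u \<open>prefix u1 x\<close> unfolding B1_def by auto
      qed
    qed
  qed
  have card: "card (B1 c x) \<le> k + 1" for x
  proof -
    have "card (B1 c x) = card (c ` B1 c x)" using inj card_image by metis
    also have "\<dots> \<le> card {0..k}" by (rule card_mono) (use col in auto)
    finally show ?thesis by simp
  qed
  have self: "v \<in> B1 c v" for v
    unfolding B1_def by (auto dest: prefix_order.antisym simp: prefix_order.less_le_not_le)
  have td: "tree_decomposition UNIV TE1 (B1 c) UNIV (Tk_edge c)"
    unfolding tree_decomposition_def
  proof (intro conjI allI impI ballI)
    show "is_tree UNIV TE1" by (rule TE1_tree)
  next
    fix u v assume "Tk_edge c u v"
    then show "\<exists>x\<in>UNIV. u \<in> B1 c x \<and> v \<in> B1 c x"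
      unfolding Tk_edge_def
    proof
      assume "Tk_arc c u v"
      then have "u \<in> B1 c v" unfolding Tk_arc_def B1_def by auto
      then show ?thesis using self by blast
    next
      assume "Tk_arc c v u"
      then have "v \<in> B1 c u" unfolding Tk_arc_def B1_def by auto
      then show ?thesis using self by blast
    qed
  next
    fix v :: "nat list"
    show "{x \<in> UNIV. v \<in> B1 c x} \<noteq> {}" using self by blast
  next
    fix v :: "nat list"
    show "induces_connected TE1 {x \<in> UNIV. v \<in> B1 c x}"
      unfolding induces_connected_def
    proof (intro ballI)
      fix x y assume x: "x \<in> {x \<in> UNIV. v \<in> B1 c x}" and y: "y \<in> {x \<in> UNIV. v \<in> B1 c x}"
      have cl: "z \<in> {x \<in> UNIV. v \<in> B1 c x}" if "prefix v z" "prefix z x'" "v \<in> B1 c x'" for z x'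
        using that unfolding B1_def by (auto intro: prefix_order.trans)
      show "\<exists>p. path_in TE1 {x \<in> UNIV. v \<in> B1 c x} p x y"
        by (rule conn_lemma[of v x y]) (use x y cl in \<open>auto simp: B1_def\<close>)
    qed
  qed auto
  show ?thesis unfolding tw_le_def using td fin card by blast
qed

lemma path_take:
  assumes "path_in E S p x y" "i < length p"
  shows "path_in E S (take (Suc i) p) x (p ! i)"
proof -
  have l: "last (take (Suc i) p) = p ! i" using assms(2)
    by (simp add: take_Suc_conv_app_nth)
  show ?thesis using assms(1) l set_take_subset[of "Suc i" p] assms(2) unfolding path_in_def
    by (auto simp: min_def)
qed
lemma path_append:
  assumes "path_in E S p x y" "path_in E S q y z" "set p \<inter> set (tl q) = {}"
  shows "path_in E S (p @ tl q) x z"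
proof -
  have pi: "p \<noteq> []" "hd p = x" "last p = y" "distinct p" "set p \<subseteq> S" "successively E p"
    using assms(1) unfolding path_in_iff by auto
  obtain q' where q: "q = y # q'" using assms(2) by (cases q) (auto simp: path_in_iff)
  have qi: "last (y # q') = z" "distinct (y # q')" "set (y # q') \<subseteq> S" "successively E (y # q')"
    using assms(2) unfolding path_in_iff q by auto
  have "successively E (p @ q')"
    using pi(3,6) qi(4) by (auto simp: successively_append_iff successively_Cons)
  moreover have "distinct (p @ q')" using pi(4) qi(2) assms(3) q by auto
  moreover have "last (p @ q') = z" using pi(3) qi(1) by (cases "q' = []") auto
  ultimately show ?thesis using pi qi q unfolding path_in_iff by auto
qed

lemma drop_last1: "length (xs::'a list) = Suc n \<Longrightarrow> last xs = a \<Longrightarrow> drop n xs = [a]"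
  by (metis append_eq_conv_conj last_snoc length_Suc_conv_rev)
lemma nth_in_drop: "(n::nat) \<le> m \<Longrightarrow> m < length xs \<Longrightarrow> xs ! m \<in> set (drop n xs)"
proof -
  assume a: "n \<le> m" "m < length xs"
  have "xs ! m = drop n xs ! (m - n)" using a by simp
  moreover have "m - n < length (drop n xs)" using a by simp
  ultimately show ?thesis by (metis nth_mem)
qed

locale univ =
  fixes TV :: "'b set" and TE :: "'b \<Rightarrow> 'b \<Rightarrow> bool" and B :: "'b \<Rightarrow> 'a set"
    and V :: "'a set" and E :: "'a \<Rightarrow> 'a \<Rightarrow> bool" and k :: nat and c :: "nat list \<Rightarrow> nat"
  assumes td: "tree_decomposition TV TE B V E"
    and bags: "\<forall>x\<in>TV. finite (B x) \<and> card (B x) \<le> k + 1"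
    and cV: "countable V" and sg: "simple_graph V E" and colr: "Tk_colouring k c"
begin

definition r where "r = (SOME x. x \<in> TV)"
definition rp where "rp x = (THE p. path_in TE TV p r x)"
definition dist where "dist x = length (rp x) - 1"
definition Tv where "Tv v = {x\<in>TV. v \<in> B x}"
definition d where "d v = (LEAST n. \<exists>x\<in>Tv v. dist x = n)"
definition top where "top v = (SOME x. x \<in> Tv v \<and> dist x = d v)"

lemma tree: "is_tree TV TE" using td by (simp add: tree_decomposition_def)

lemma r_in: "r \<in> TV"
  using tree unfolding is_tree_def r_def by (auto intro: someI)

lemma ex1_path: "x \<in> TV \<Longrightarrow> \<exists>!p. path_in TE TV p r x"
  using tree r_in unfolding is_tree_def by blast

lemma rp_path: "x \<in> TV \<Longrightarrow> path_in TE TV (rp x) r x"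
  unfolding rp_def by (rule theI'[OF ex1_path])

lemma rp_unique: "x \<in> TV \<Longrightarrow> path_in TE TV p r x \<Longrightarrow> p = rp x"
  unfolding rp_def by (rule the1_equality[OF ex1_path, symmetric])

lemma rp_len: "x \<in> TV \<Longrightarrow> length (rp x) = Suc (dist x)"
  using rp_path[of x] unfolding dist_def path_in_def by (cases "rp x") auto

lemma rp_take:
  assumes "x \<in> TV" "i < length (rp x)"
  shows "rp (rp x ! i) = take (Suc i) (rp x)" "dist (rp x ! i) = i"
proof -
  have p: "path_in TE TV (take (Suc i) (rp x)) r (rp x ! i)"
    using path_take[OF rp_path[OF assms(1)] assms(2)] .
  have inTV: "rp x ! i \<in> TV" using rp_path[OF assms(1)] assms(2) unfolding path_in_def
    by (auto dest: nth_mem)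
  show e: "rp (rp x ! i) = take (Suc i) (rp x)" using rp_unique[OF inTV p] by simp
  show "dist (rp x ! i) = i" using e rp_len[OF inTV] assms(2) by simp
qed

lemma rp_last: "x \<in> TV \<Longrightarrow> rp x ! dist x = x"
  using rp_path[of x] rp_len[of x] unfolding path_in_def by (metis diff_Suc_1 last_conv_nth)

lemma Tv_sub: "Tv v \<subseteq> TV" unfolding Tv_def by auto

lemma Tv_conn: "v \<in> V \<Longrightarrow> induces_connected TE (Tv v)"
  using td unfolding tree_decomposition_def Tv_def by auto

lemma Tv_ne: "v \<in> V \<Longrightarrow> Tv v \<noteq> {}"
  using td unfolding tree_decomposition_def Tv_def by auto

lemma top_props:
  assumes "v \<in> V"
  shows "top v \<in> Tv v" "dist (top v) = d v" "\<And>y. y \<in> Tv v \<Longrightarrow> d v \<le> dist y"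
proof -
  obtain y where y: "y \<in> Tv v" using Tv_ne[OF assms] by blast
  have ex: "\<exists>n. \<exists>x\<in>Tv v. dist x = n" using y by blast
  have "\<exists>x\<in>Tv v. dist x = d v" unfolding d_def by (rule LeastI_ex[OF ex])
  then have "top v \<in> Tv v \<and> dist (top v) = d v" unfolding top_def using someI_ex[of "\<lambda>x. x \<in> Tv v \<and> dist x = d v"] by blast
  then show "top v \<in> Tv v" "dist (top v) = d v" by auto
  show "\<And>y. y \<in> Tv v \<Longrightarrow> d v \<le> dist y" unfolding d_def by (blast intro: Least_le)
qed

lemma claimA:
  assumes S: "S \<subseteq> TV" "induces_connected TE S" and y: "y \<in> S" "\<forall>z\<in>S. dist y \<le> dist z"
    and x: "x \<in> S"
  shows "\<exists>q. path_in TE S q y x \<and> rp x = rp y @ tl q"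
proof -
  obtain q where q: "path_in TE S q y x" using S(2) y x unfolding induces_connected_def by blast
  have yT: "y \<in> TV" "x \<in> TV" using S y x by auto
  have qT: "path_in TE TV q y x" using q S(1) unfolding path_in_def by auto
  have disj: "set (rp y) \<inter> set (tl q) = {}"
  proof (rule ccontr)
    assume "set (rp y) \<inter> set (tl q) \<noteq> {}"
    then obtain z where z: "z \<in> set (rp y)" "z \<in> set (tl q)" by blast
    then obtain i where i: "i < length (rp y)" "rp y ! i = z" by (auto simp: in_set_conv_nth)
    have zS: "z \<in> S" using z(2) q unfolding path_in_def by (cases q) auto
    have dz: "dist z = i" using rp_take(2)[OF yT(1) i(1)] i(2) by simp
    have "i \<noteq> dist y"
    proof
      assume "i = dist y"
      then have "z = y" using rp_last[OF yT(1)] i by simp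
      moreover have "y \<notin> set (tl q)" using q unfolding path_in_def by (cases q) auto
      ultimately show False using z by simp
    qed
    then have "i < dist y" using i(1) rp_len[OF yT(1)] by simp
    then show False using y(2) zS dz by auto
  qed
  have "path_in TE TV (rp y @ tl q) r x" by (rule path_append[OF rp_path[OF yT(1)] qT disj])
  then have "rp x = rp y @ tl q" using rp_unique[OF yT(2)] by simp
  then show ?thesis using q by blast
qed

lemma keyK:
  assumes u: "u \<in> V" and v: "v \<in> V" and x: "x \<in> TV" "u \<in> B x" "v \<in> B x" and duv: "d u \<le> d v"
  shows "u \<in> B (top v)"
proof -
  have xu: "x \<in> Tv u" and xv: "x \<in> Tv v" using x unfolding Tv_def by auto
  obtain qu where qu: "path_in TE (Tv u) qu (top u) x" "rp x = rp (top u) @ tl qu"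
    using claimA[OF Tv_sub Tv_conn[OF u] top_props(1)[OF u] _ xu] top_props[OF u] by auto
  obtain qv where qv: "path_in TE (Tv v) qv (top v) x" "rp x = rp (top v) @ tl qv"
    using claimA[OF Tv_sub Tv_conn[OF v] top_props(1)[OF v] _ xv] top_props[OF v] by auto
  have tuT: "top u \<in> TV" and tvT: "top v \<in> TV" using top_props(1)[OF u] top_props(1)[OF v] Tv_sub by auto
  have lu: "length (rp (top u)) = Suc (d u)" using rp_len[OF tuT] top_props(2)[OF u] by simp
  have lv: "length (rp (top v)) = Suc (d v)" using rp_len[OF tvT] top_props(2)[OF v] by simp
  have nv: "rp x ! d v = top v"
    using qv(2) lv rp_last[OF tvT] top_props(2)[OF v] by (simp add: nth_append)
  have qu0: "hd qu = top u" "qu \<noteq> []" using qu(1) unfolding path_in_def by auto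
  have lastu: "last (rp (top u)) = top u" using rp_path[OF tuT] unfolding path_in_def by auto
  have "drop (d u) (rp x) = qu"
  proof -
    have "drop (d u) (rp (top u)) = [top u]"
      using lu lastu rp_path[OF tuT] unfolding path_in_def
      by (intro drop_last1) auto 
    then show ?thesis using qu(2) lu qu0 by (cases qu) auto
  qed
  moreover have "d v < length (rp x)" using qv(2) lv by simp
  ultimately have "rp x ! d v \<in> set qu"
    using duv nth_in_drop[of "d u" "d v" "rp x"] by simp
  then have "top v \<in> Tv u" using nv qu(1) unfolding path_in_def by auto
  then show ?thesis unfolding Tv_def by auto
qed

end

context univ
begin

definition idx where "idx = to_nat_on V"
definition lt where "lt a b \<longleftrightarrow> d a < d b \<or> (d a = d b \<and> idx a < idx b)"
definition P where "P v = {u \<in> B (top v). lt u v}"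
definition par where "par v = (THE b. b \<in> P v \<and> (\<forall>a\<in>P v. a = b \<or> lt a b))"
definition jj where "jj g v = (LEAST j. j \<notin> c ` g ` P v)"
definition H where
  "H g v = (if P v = {} then [idx v]
            else g (par v) @ [enumerate {n. c (g (par v) @ [n]) = jj g v} (idx v)])"
definition R where "R = {(a, b). lt a b}"
definition f where "f = wfrec R H"

lemma idx_inj: "inj_on idx V" unfolding idx_def using cV by (rule inj_on_to_nat_on)

lemma wfR: "wf R"
proof -
  have "R = inv_image (less_than <*lex*> less_than) (\<lambda>v. (d v, idx v))"
    unfolding R_def lt_def inv_image_def by auto
  then show ?thesis by (simp add: wf_lex_prod)
qed

lemma lt_irrefl: "\<not> lt a a" unfolding lt_def by auto
lemma lt_trans: "lt a b \<Longrightarrow> lt b c' \<Longrightarrow> lt a c'" unfolding lt_def by auto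
lemma lt_total: "a \<in> V \<Longrightarrow> b \<in> V \<Longrightarrow> a \<noteq> b \<Longrightarrow> lt a b \<or> lt b a"
  using idx_inj unfolding lt_def inj_on_def by (metis linorder_neqE_nat)

lemma top_TV: "v \<in> V \<Longrightarrow> top v \<in> TV" using top_props(1) Tv_sub by blast

lemma B_sub: "x \<in> TV \<Longrightarrow> B x \<subseteq> V" using td unfolding tree_decomposition_def by auto

lemma P_sub: "v \<in> V \<Longrightarrow> P v \<subseteq> V" unfolding P_def using B_sub[OF top_TV] by auto

lemma P_fin: "v \<in> V \<Longrightarrow> finite (P v)"
  unfolding P_def using bags top_TV by auto

lemma P_card: "v \<in> V \<Longrightarrow> card (P v) \<le> k"
proof -
  assume v: "v \<in> V"
  have fin: "finite (B (top v))" "card (B (top v)) \<le> k + 1" using bags top_TV[OF v] by auto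
  have vin: "v \<in> B (top v)" using top_props(1)[OF v] unfolding Tv_def by auto
  have "P v \<subseteq> B (top v) - {v}" unfolding P_def using lt_irrefl by auto
  then have "card (P v) \<le> card (B (top v) - {v})" using fin by (intro card_mono) auto
  also have "\<dots> = card (B (top v)) - 1" using vin fin by simp
  finally show ?thesis using fin by simp
qed

lemma has_max: "finite A \<Longrightarrow> A \<noteq> {} \<Longrightarrow> A \<subseteq> V \<Longrightarrow> \<exists>b\<in>A. \<forall>a\<in>A. a = b \<or> lt a b"
proof (induction A rule: finite_induct)
  case empty then show ?case by simp
next
  case (insert x A)
  show ?case
  proof (cases "A = {}")
    case True then show ?thesis by simp
  next
    case False
    have "A \<subseteq> V" using insert.prems by simp
    then obtain b where b: "b \<in> A" "\<forall>a\<in>A. a = b \<or> lt a b" using insert.IH False by blast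
    have "x \<in> V" "b \<in> V" using insert.prems b \<open>A \<subseteq> V\<close> by auto
    show ?thesis
    proof (cases "lt b x")
      case True
      have "\<forall>a\<in>insert x A. a = x \<or> lt a x"
      proof
        fix a assume "a \<in> insert x A"
        then show "a = x \<or> lt a x" using b True lt_trans[of a b x] by auto
      qed
      then show ?thesis by blast
    next
      case False
      then have "x = b \<or> lt x b" using lt_total[OF \<open>x \<in> V\<close> \<open>b \<in> V\<close>] by blast
      then show ?thesis using b by blast
    qed
  qed
qed

lemma par_props:
  assumes v: "v \<in> V" and ne: "P v \<noteq> {}"
  shows "par v \<in> P v" "\<And>a. a \<in> P v \<Longrightarrow> a = par v \<or> lt a (par v)"
proof -
  obtain b where b: "b \<in> P v" "\<forall>a\<in>P v. a = b \<or> lt a b"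
    using has_max[OF P_fin[OF v] ne P_sub[OF v]] by blast
  have "par v = b" unfolding par_def
  proof (rule the_equality)
    show "b \<in> P v \<and> (\<forall>a\<in>P v. a = b \<or> lt a b)" using b by blast
  next
    fix b' assume b': "b' \<in> P v \<and> (\<forall>a\<in>P v. a = b' \<or> lt a b')"
    show "b' = b"
    proof (rule ccontr)
      assume ne: "b' \<noteq> b"
      then have "lt b' b" "lt b b'" using b b' by auto
      then show False using lt_trans[of b' b b'] lt_irrefl[of b'] by simp
    qed
  qed
  then show "par v \<in> P v" "\<And>a. a \<in> P v \<Longrightarrow> a = par v \<or> lt a (par v)" using b by auto
qed

lemma P_clique:
  assumes v: "v \<in> V" and a: "a \<in> P v" and b: "b \<in> P v" and ab: "lt a b"
  shows "a \<in> P b"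
proof -
  have "a \<in> V" "b \<in> V" using P_sub[OF v] a b by auto
  moreover have "a \<in> B (top v)" "b \<in> B (top v)" using a b unfolding P_def by auto
  moreover have "d a \<le> d b" using ab unfolding lt_def by auto
  ultimately have "a \<in> B (top b)" using keyK top_TV[OF v] by blast
  then show ?thesis unfolding P_def using ab by auto
qed

lemma f_eq: assumes vV: "v \<in> V" shows "f v = H f v"
proof -
  have "f v = H (cut f R v) v" unfolding f_def by (rule wfrec[OF wfR])
  also have "\<dots> = H f v"
  proof -
    have agree: "\<And>u. u \<in> P v \<Longrightarrow> cut f R v u = f u"
      unfolding cut_def R_def P_def by auto
    have img: "cut f R v ` P v = f ` P v" using agree by (simp add: image_def)
    have jj: "jj (cut f R v) v = jj f v" unfolding jj_def img ..
    show ?thesis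
    proof (cases "P v = {}")
      case True then show ?thesis unfolding H_def by simp
    next
      case False
      have "par v \<in> P v" using par_props(1)[OF vV False] .
      then show ?thesis unfolding H_def using False agree jj by simp
    qed
  qed
  finally show ?thesis .
qed

end

context univ
begin

lemma jj_props:
  assumes v: "v \<in> V"
  shows "jj f v \<le> k" "jj f v \<notin> c ` f ` P v"
proof -
  have "card (c ` f ` P v) \<le> card (P v)"
    using P_fin[OF v] by (metis card_image_le finite_imageI image_comp)
  then have ck: "card (c ` f ` P v) \<le> k" using P_card[OF v] by simp
  have "\<exists>j. j \<le> k \<and> j \<notin> c ` f ` P v"
  proof (rule ccontr)
    assume "\<not> ?thesis"
    then have "{0..k} \<subseteq> c ` f ` P v" by auto
    then have "card {0..k} \<le> card (c ` f ` P v)" using P_fin[OF v] by (intro card_mono) auto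
    then show False using ck by simp
  qed
  then obtain j where j: "j \<le> k" "j \<notin> c ` f ` P v" by blast
  show "jj f v \<notin> c ` f ` P v" unfolding jj_def by (rule LeastI[of _ j]) (rule j(2))
  have "jj f v \<le> j" unfolding jj_def by (rule Least_le) (rule j(2))
  then show "jj f v \<le> k" using j by simp
qed

definition S where "S v = {n. c (f (par v) @ [n]) = jj f v}"

lemma f_snoc:
  assumes v: "v \<in> V" and ne: "P v \<noteq> {}"
  shows "f v = f (par v) @ [enumerate (S v) (idx v)]" "infinite (S v)"
    "c (f v) = jj f v" "jj f v \<noteq> c (f (par v))"
proof -
  show e: "f v = f (par v) @ [enumerate (S v) (idx v)]"
    using f_eq[OF v] ne unfolding H_def S_def by simp
  show jn: "jj f v \<noteq> c (f (par v))" using jj_props(2)[OF v] par_props(1)[OF v ne] by blast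
  show inf: "infinite (S v)" unfolding S_def
    using colr jj_props(1)[OF v] jn unfolding Tk_colouring_def by auto
  have "enumerate (S v) (idx v) \<in> S v" by (rule enumerate_in_set[OF inf])
  then show "c (f v) = jj f v" using e unfolding S_def by simp
qed

lemma f_ne: "v \<in> V \<Longrightarrow> f v \<noteq> []"
  using f_eq[of v] unfolding H_def by (auto split: if_splits)

lemma arc: "v \<in> V \<Longrightarrow> a \<in> P v \<Longrightarrow> Tk_arc c (f a) (f v)"
proof (induction v arbitrary: a rule: wf_induct_rule[OF wfR])
  case (1 v)
  have ne: "P v \<noteq> {}" using 1 by auto
  note fs = f_snoc[OF \<open>v \<in> V\<close> ne]
  define b where "b = par v"
  have bP: "b \<in> P v" using par_props(1)[OF \<open>v \<in> V\<close> ne] b_def by simp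
  have bV: "b \<in> V" using P_sub[OF \<open>v \<in> V\<close>] bP by auto
  have jnot: "c (f v) \<noteq> c (f a)" using fs(3) jj_props(2)[OF \<open>v \<in> V\<close>] 1(3) by auto
  have fv: "f v = f b @ [enumerate (S v) (idx v)]" using fs(1) b_def by simp
  show ?case
  proof (cases "a = b")
    case True
    show ?thesis unfolding Tk_arc_def
    proof (intro conjI allI impI)
      show "strict_prefix (f a) (f v)" using fv True prefix_snocD[of "f b" _ "f v"] by simp
    next
      fix u assume u: "strict_prefix (f a) u \<and> prefix u (f v)"
      then have "u = f v" using fv True
        by (metis prefix_order.less_le_not_le prefix_snoc)
      then show "c u \<noteq> c (f a)" using jnot by simp
    qed
  next
    case False
    then have "lt a b" using par_props(2)[OF \<open>v \<in> V\<close> ne 1(3)] b_def by auto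
    then have aPb: "a \<in> P b" using P_clique[OF \<open>v \<in> V\<close> 1(3) bP] by simp
    have "(b, v) \<in> R" using bP unfolding P_def R_def by auto
    then have IH: "Tk_arc c (f a) (f b)" using 1(1) bV aPb by blast
    show ?thesis unfolding Tk_arc_def
    proof (intro conjI allI impI)
      have "prefix (f b) (f v)" using fv by simp
      then show "strict_prefix (f a) (f v)" using IH unfolding Tk_arc_def
        using prefix_order.less_le_trans by blast
    next
      fix u assume u: "strict_prefix (f a) u \<and> prefix u (f v)"
      then have "u = f v \<or> prefix u (f b)" using fv by simp
      then show "c u \<noteq> c (f a)" using jnot IH u unfolding Tk_arc_def by auto
    qed
  qed
qed

lemma f_inj: "inj_on f V"
proof (rule inj_onI)
  fix v w assume v: "v \<in> V" and w: "w \<in> V" and eq: "f v = f w"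
  show "v = w"
  proof (cases "P v = {}"; cases "P w = {}")
    assume "P v = {}" "P w = {}"
    then have "[idx v] = [idx w]" using eq f_eq[OF v] f_eq[OF w] unfolding H_def by simp
    then show ?thesis using idx_inj v w unfolding inj_on_def by simp
  next
    assume a: "P v = {}" "P w \<noteq> {}"
    have "length (f v) = 1" using f_eq[OF v] a unfolding H_def by simp
    moreover have "length (f w) \<ge> 2" using f_snoc(1)[OF w a(2)] f_ne[of "par w"]
      P_sub[OF w] par_props(1)[OF w a(2)] by (cases "f (par w)") auto
    ultimately show ?thesis using eq by simp
  next
    assume a: "P v \<noteq> {}" "P w = {}"
    have "length (f w) = 1" using f_eq[OF w] a unfolding H_def by simp
    moreover have "length (f v) \<ge> 2" using f_snoc(1)[OF v a(1)] f_ne[of "par v"]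
      P_sub[OF v] par_props(1)[OF v a(1)] by (cases "f (par v)") auto
    ultimately show ?thesis using eq by simp
  next
    assume a: "P v \<noteq> {}" "P w \<noteq> {}"
    have cj: "jj f v = jj f w" using f_snoc(3)[OF v a(1)] f_snoc(3)[OF w a(2)] eq by simp
    have pp: "f (par v) = f (par w)" and en: "enumerate (S v) (idx v) = enumerate (S w) (idx w)"
      using f_snoc(1)[OF v a(1)] f_snoc(1)[OF w a(2)] eq by auto
    have SS: "S v = S w" unfolding S_def using cj pp by simp
    have "idx v = idx w"
      using en SS f_snoc(2)[OF v a(1)] strict_mono_enumerate[of "S v"]
      by (metis strict_mono_eq)
    then show ?thesis using idx_inj v w unfolding inj_on_def by simp
  qed
qed

lemma embed: "contains_graph UNIV (Tk_edge c) V E"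
  unfolding contains_graph_def
proof (intro exI conjI allI impI)
  show "inj_on f V" by (rule f_inj)
  show "f ` V \<subseteq> UNIV" by simp
next
  fix x y assume exy: "E x y"
  then have xy: "x \<in> V" "y \<in> V" "x \<noteq> y" using sg unfolding simple_graph_def by auto
  obtain t where t: "t \<in> TV" "x \<in> B t" "y \<in> B t"
    using td exy unfolding tree_decomposition_def by blast
  consider "lt x y" | "lt y x" using lt_total[OF xy] by blast
  then show "Tk_edge c (f x) (f y)"
  proof cases
    case 1
    then have "d x \<le> d y" unfolding lt_def by auto
    then have "x \<in> B (top y)" using keyK[OF xy(1,2) t] by simp
    then have "x \<in> P y" using 1 unfolding P_def by simp
    then show ?thesis using arc[OF xy(2)] unfolding Tk_edge_def by blast
  next
    case 2
    then have "d y \<le> d x" unfolding lt_def by auto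
    then have "y \<in> B (top x)" using keyK[OF xy(2,1) t(1,3,2)] by simp
    then have "y \<in> P x" using 2 unfolding P_def by simp
    then show ?thesis using arc[OF xy(1)] unfolding Tk_edge_def by blast
  qed
qed

end

theorem mainTheorem11:
  fixes k :: nat and c :: "nat list \<Rightarrow> nat"
  assumes "Tk_colouring k c"
  shows "tw_le TYPE(nat list) k UNIV (Tk_edge c) \<and>
         (\<forall>(V :: 'a set) E. countable V \<and> simple_graph V E \<and> tw_le TYPE('b) k V E
              \<longrightarrow> contains_graph UNIV (Tk_edge c) V E)"
proof (intro conjI allI impI)
  show "tw_le TYPE(nat list) k UNIV (Tk_edge c)" by (rule part1[OF assms])
next
  fix V :: "'a set" and E
  assume a: "countable V \<and> simple_graph V E \<and> tw_le TYPE('b) k V E"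
  then obtain TV :: "'b set" and TE B where t: "tree_decomposition TV TE B V E"
    "\<forall>x\<in>TV. finite (B x) \<and> card (B x) \<le> k + 1"
    unfolding tw_le_def by blast
  interpret univ TV TE B V E k c
    using t a assms by unfold_locales auto
  show "contains_graph UNIV (Tk_edge c) V E" by (rule embed)
qed

end
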